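(* For every $0<p<2$ there exist a separable Hilbert space $\mathcal{H}$, a finite collection $\mathcal{A}$ of observables on $\mathcal{H}$, and states $\rho,\tau,\omega\in\mathcal{S}(\mathcal{H})$ such that $$d_{\mathcal{A},p}(\rho,\omega)>d_{\mathcal{A},p}(\rho,\tau)+d_{\mathcal{A},p}(\tau,\omega).$$
   Context: For a Hilbert space $\mathcal{H}$, $\mathcal{S}(\mathcal{H})$ is the set of positive trace-class operators with unit trace (states); observables are self-adjoint operators. For an operator $A$ on $\mathcal{H}$, $A^T$ is the operator on the dual $\mathcal{H}^*$ given by $(A^T\eta)(\varphi)=\eta(A\varphi)$. Couplings: $\mathcal{C}(\rho,\omega)=\{\Pi\in\mathcal{S}(\mathcal{H}\otimes\mathcal{H}^* ): \mathrm{tr}_{\mathcal{H}^*}[\Pi]=\omega,\ \mathrm{tr}_{\mathcal{H}}[\Pi]=\rho^T\}$. For a finite collection $\mathcal{A}=\{A_1,\dots,A_K\}$ of observables and $0<p<\infty$, $C_{\mathcal{A},p}=\sum_{k=1}^K|A_k\otimes I^T-I\otimes A_k^T|^p$, $D_{\mathcal{A},p}(\rho,\omega)=\big(\inf_{\Pi\in\mathcal{C}(\rho,\omega)}\mathrm{tr}[\Pi C_{\mathcal{A},p}]\big)^{\min\{1/p,1\}}$, and $$d_{\mathcal{A},p}(\rho,\omega)=\Big(D_{\mathcal{A},p}^{\max\{p,1\}}(\rho,\omega)-\tfrac12\big(D_{\mathcal{A},p}^{\max\{p,1\}}(\rho,\rho)+D_{\mathcal{A},p}^{\max\{p,1\}}(\omega,\omega)\big)\Big)^{\min\{1/p,1\}}.$$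 *)

theory Defs
  imports "HOL-Analysis.Analysis" "Jordan_Normal_Form.Matrix"
begin

text \<open>Finite-dimensional model: the Hilbert space is C^n with its standard basis;
  operators are complex n x n matrices (JNF type mat).  The dual space H* is
  identified with C^n via the dual basis, in which the matrix of A^T is the
  transpose of the matrix of A.  H (x) H* is C^(n*n) with the Kronecker
  ordering: index i*n+j corresponds to e_i (x) e_j^*.\<close>

definition cadj :: "complex mat \<Rightarrow> complex mat" where
  "cadj A = mat (dim_col A) (dim_row A) (\<lambda>(i,j). cnj (A $$ (j,i)))"

definition mtrace :: "complex mat \<Rightarrow> complex" where
  "mtrace A = (\<Sum>i<dim_row A. A $$ (i,i))"

definition cinner :: "complex vec \<Rightarrow> complex vec \<Rightarrow> complex" where
  "cinner v w = (\<Sum>i<dim_vec v. cnj (v $ i) * w $ i)"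

definition self_adjoint :: "nat \<Rightarrow> complex mat \<Rightarrow> bool" where
  "self_adjoint n A \<longleftrightarrow> A \<in> carrier_mat n n \<and> cadj A = A"

definition positive_op :: "nat \<Rightarrow> complex mat \<Rightarrow> bool" where
  "positive_op n A \<longleftrightarrow> self_adjoint n A \<and>
     (\<forall>v \<in> carrier_vec n. 0 \<le> Re (cinner v (A *\<^sub>v v)))"

definition is_state :: "nat \<Rightarrow> complex mat \<Rightarrow> bool" where
  "is_state n \<rho> \<longleftrightarrow> positive_op n \<rho> \<and> mtrace \<rho> = 1"

definition unitary_mat :: "nat \<Rightarrow> complex mat \<Rightarrow> bool" where
  "unitary_mat n U \<longleftrightarrow> U \<in> carrier_mat n n \<and> cadj U * U = 1\<^sub>m n"

text \<open>Functional calculus |A|^p for a self-adjoint A, via a spectral decomposition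
  A = U diag(d) U^*.  (Well defined for self-adjoint A; 0 powr p = 0.)\<close>
definition abs_powr :: "nat \<Rightarrow> complex mat \<Rightarrow> real \<Rightarrow> complex mat" where
  "abs_powr n A p = (SOME B. \<exists>U d. unitary_mat n U \<and>
      A = U * mat_diag n (\<lambda>i. complex_of_real (d i)) * cadj U \<and>
      B = U * mat_diag n (\<lambda>i. complex_of_real (\<bar>d i\<bar> powr p)) * cadj U)"

definition kron :: "complex mat \<Rightarrow> complex mat \<Rightarrow> complex mat" where
  "kron A B = mat (dim_row A * dim_row B) (dim_col A * dim_col B)
     (\<lambda>(i,j). A $$ (i div dim_row B, j div dim_col B) * B $$ (i mod dim_row B, j mod dim_col B))"

definition ptrace_dual :: "nat \<Rightarrow> complex mat \<Rightarrow> complex mat" where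
  "ptrace_dual n P = mat n n (\<lambda>(i,j). \<Sum>k<n. P $$ (i*n+k, j*n+k))"

definition ptrace_primal :: "nat \<Rightarrow> complex mat \<Rightarrow> complex mat" where
  "ptrace_primal n P = mat n n (\<lambda>(i,j). \<Sum>k<n. P $$ (k*n+i, k*n+j))"

definition couplings :: "nat \<Rightarrow> complex mat \<Rightarrow> complex mat \<Rightarrow> complex mat set" where
  "couplings n \<rho> \<omega> = {P. is_state (n*n) P \<and> ptrace_dual n P = \<omega>
                           \<and> ptrace_primal n P = transpose_mat \<rho>}"

definition cost_op :: "nat \<Rightarrow> complex mat list \<Rightarrow> real \<Rightarrow> complex mat" where
  "cost_op n As p = foldr (\<lambda>A C. abs_powr (n*n)
       (kron A (transpose_mat (1\<^sub>m n)) - kron (1\<^sub>m n) (transpose_mat A)) p + C)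
     As (0\<^sub>m (n*n) (n*n))"

definition D_qot :: "nat \<Rightarrow> complex mat list \<Rightarrow> real \<Rightarrow> complex mat \<Rightarrow> complex mat \<Rightarrow> real" where
  "D_qot n As p \<rho> \<omega> =
     (Inf {Re (mtrace (P * cost_op n As p)) | P. P \<in> couplings n \<rho> \<omega>}) powr (min (1/p) 1)"

definition d_qot :: "nat \<Rightarrow> complex mat list \<Rightarrow> real \<Rightarrow> complex mat \<Rightarrow> complex mat \<Rightarrow> real" where
  "d_qot n As p \<rho> \<omega> =
     (D_qot n As p \<rho> \<omega> powr (max p 1)
       - 1/2 * (D_qot n As p \<rho> \<rho> powr (max p 1) + D_qot n As p \<omega> \<omega> powr (max p 1)))
     powr (min (1/p) 1)"

end

theory Submission
  imports Defs
begin

lemma cadj_carrier: "A \<in> carrier_mat n m \<Longrightarrow> cadj A \<in> carrier_mat m n"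
  by (auto simp: cadj_def)

lemma cadj_one: "cadj (1\<^sub>m n) = 1\<^sub>m n"
  by (rule eq_matI) (auto simp: cadj_def)

lemma abs_powr_diag:
  fixes m :: "nat \<Rightarrow> real"
  assumes M: "M = mat_diag n (\<lambda>i. complex_of_real (m i))"
    and MMM: "M * M * M = M"
  shows "abs_powr n M p = M * M"
proof -
  let ?Q = "\<lambda>B. \<exists>U d. unitary_mat n U \<and>
      M = U * mat_diag n (\<lambda>i. complex_of_real (d i)) * cadj U \<and>
      B = U * mat_diag n (\<lambda>i. complex_of_real (\<bar>d i\<bar> powr p)) * cadj U"
  have ex: "\<exists>B. ?Q B"
    apply (rule exI[of _ "1\<^sub>m n * mat_diag n (\<lambda>i. complex_of_real (\<bar>m i\<bar> powr p)) * cadj (1\<^sub>m n)"])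
    apply (rule exI[of _ "1\<^sub>m n"], rule exI[of _ m])
    by (auto simp: unitary_mat_def cadj_one M left_mult_one_mat[of _ n n] right_mult_one_mat[of _ n n])
  have "?Q (abs_powr n M p)" unfolding abs_powr_def by (rule someI_ex[OF ex])
  then obtain U d where U: "unitary_mat n U" and
    MU: "M = U * mat_diag n (\<lambda>i. complex_of_real (d i)) * cadj U" and
    B: "abs_powr n M p = U * mat_diag n (\<lambda>i. complex_of_real (\<bar>d i\<bar> powr p)) * cadj U"
    by blast
  define D where "D = mat_diag n (\<lambda>i. complex_of_real (d i))"
  have Uc: "U \<in> carrier_mat n n" and UU: "cadj U * U = 1\<^sub>m n" using U by (auto simp: unitary_mat_def)
  have Uac: "cadj U \<in> carrier_mat n n" using Uc by (rule cadj_carrier)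
  have Dc: "D \<in> carrier_mat n n" by (simp add: D_def)
  have MU': "M = U * D * cadj U" using MU D_def by simp
  have key: "U * X * cadj U * (U * Y * cadj U) = U * (X * Y) * cadj U"
    if "X \<in> carrier_mat n n" "Y \<in> carrier_mat n n" for X Y
  proof -
    have "U * X * cadj U * (U * Y * cadj U) = U * X * (cadj U * U) * Y * cadj U"
      using that Uc Uac by (simp add: assoc_mult_mat[of _ n n _ n _ n])
    also have "\<dots> = U * (X * Y) * cadj U" using that Uc Uac UU by simp
    finally show ?thesis .
  qed
  have bk: "cadj U * (U * X * cadj U) * U = X" if "X \<in> carrier_mat n n" for X
  proof -
    have "cadj U * (U * X * cadj U) * U = (cadj U * U) * X * (cadj U * U)"
      using that Uc Uac by (simp add: assoc_mult_mat[of _ n n _ n _ n])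
    also have "\<dots> = X" using that UU by simp
    finally show ?thesis .
  qed
  have mm: "M * M = U * (D * D) * cadj U" unfolding MU' by (rule key[OF Dc Dc])
  have "M * M * M = (U * (D * D) * cadj U) * (U * D * cadj U)" using mm MU' by metis
  also have "\<dots> = U * (D * D * D) * cadj U" by (rule key) (use Dc in auto)
  finally have m3: "M * M * M = U * (D * D * D) * cadj U" .
  have "D * D * D = cadj U * (U * (D * D * D) * cadj U) * U" by (rule bk[symmetric]) (use Dc in auto)
  also have "\<dots> = cadj U * M * U" using m3 MMM by simp
  also have "\<dots> = D" using bk[OF Dc] MU' by simp
  finally have DDD: "D * D * D = D" .
  have d3: "d i * d i * d i = d i" if "i < n" for i
  proof -
    have e: "D * D * D = mat_diag n (\<lambda>i. complex_of_real (d i * d i * d i))"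
      unfolding D_def by simp
    have "(D * D * D) $$ (i,i) = D $$ (i,i)" using DDD by simp
    hence "complex_of_real (d i * d i * d i) = complex_of_real (d i)"
      unfolding e using that by (simp add: D_def mat_diag_def)
    thus ?thesis using of_real_eq_iff by blast
  qed
  have dv: "\<bar>d i\<bar> powr p = d i * d i" if "i < n" for i
  proof -
    have "d i * (d i - 1) * (d i + 1) = 0" using d3[OF that] by (simp add: algebra_simps)
    hence "d i = 0 \<or> d i = 1 \<or> d i = -1" by auto
    thus ?thesis by auto
  qed
  have "D * D = mat_diag n (\<lambda>i. complex_of_real (d i) * complex_of_real (d i))"
    unfolding D_def by (rule mat_diag_diag)
  also have "\<dots> = mat_diag n (\<lambda>i. complex_of_real (\<bar>d i\<bar> powr p))"
    unfolding mat_diag_def by (rule eq_matI) (auto simp: dv)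
  finally have "mat_diag n (\<lambda>i. complex_of_real (\<bar>d i\<bar> powr p)) = D * D" by simp
  thus ?thesis using B mm by simp
qed

definition outer :: "nat \<Rightarrow> real \<Rightarrow> (nat \<Rightarrow> complex) \<Rightarrow> complex mat" where
  "outer n c w = mat n n (\<lambda>(i,j). complex_of_real c * w i * cnj (w j))"

lemma outer_pos:
  assumes "0 \<le> c" shows "positive_op n (outer n c w)"
  unfolding positive_op_def self_adjoint_def
proof (intro conjI ballI)
  show "outer n c w \<in> carrier_mat n n" by (simp add: outer_def)
  show "cadj (outer n c w) = outer n c w"
    by (rule eq_matI) (auto simp: cadj_def outer_def)
  fix v :: "complex vec" assume v: "v \<in> carrier_vec n"
  define z where "z = (\<Sum>i<n. cnj (v $ i) * w i)"
  have "cinner v (outer n c w *\<^sub>v v) = (\<Sum>i<n. cnj (v $ i) * (\<Sum>j<n. complex_of_real c * w i * cnj (w j) * v $ j))"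
    using v by (auto simp: cinner_def outer_def mult_mat_vec_def scalar_prod_def intro!: sum.cong)
  also have "\<dots> = complex_of_real c * z * cnj z"
    by (simp add: z_def sum_distrib_left sum_distrib_right mult_ac)
  also have "\<dots> = complex_of_real c * (z * cnj z)" by (simp add: mult.assoc)
  also have "\<dots> = complex_of_real (c * ((Re z)^2 + (Im z)^2))"
    by (simp add: complex_mult_cnj)
  finally show "0 \<le> Re (cinner v (outer n c w *\<^sub>v v))" using assms by simp
qed

lemma quad:
  assumes P: "positive_op n P" and i: "i < n" and j: "j < n" and ij: "i \<noteq> j"
  shows "0 \<le> s^2 * Re (P $$ (i,i)) + t^2 * Re (P $$ (j,j)) + 2 * s * t * Re (P $$ (i,j))"
proof -
  have Pc: "P \<in> carrier_mat n n" and sa: "cadj P = P" using P by (auto simp: positive_op_def self_adjoint_def)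
  define v where "v = vec n (\<lambda>k. if k = i then complex_of_real s else if k = j then complex_of_real t else 0)"
  have r: "(\<Sum>l<n. P $$ (k,l) * v $ l) = P $$ (k,i) * s + P $$ (k,j) * t" for k
  proof -
    have "(\<Sum>l<n. P $$ (k,l) * v $ l) = (\<Sum>l<n. (if l = i then P $$ (k,i) * s else 0) + (if l = j then P $$ (k,j) * t else 0))"
      by (rule sum.cong) (use ij in \<open>auto simp: v_def\<close>)
    also have "\<dots> = P $$ (k,i) * s + P $$ (k,j) * t" using i j by (simp add: sum.distrib)
    finally show ?thesis .
  qed
  have r2: "cinner v (P *\<^sub>v v) = (\<Sum>k<n. cnj (v $ k) * (P $$ (k,i) * s + P $$ (k,j) * t))"
    unfolding cinner_def using Pc r by (auto simp: mult_mat_vec_def scalar_prod_def v_def lessThan_atLeast0 intro!: sum.cong)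
  have r3: "\<dots> = (\<Sum>k<n. (if k = i then cnj (complex_of_real s) * (P $$ (i,i) * s + P $$ (i,j) * t) else 0) + (if k = j then cnj (complex_of_real t) * (P $$ (j,i) * s + P $$ (j,j) * t) else 0))"
    by (rule sum.cong) (use ij in \<open>auto simp: v_def\<close>)
  have vc: "v \<in> carrier_vec n" by (simp add: v_def)
  have "0 \<le> Re (cinner v (P *\<^sub>v v))" using P vc by (auto simp: positive_op_def)
  also have "cinner v (P *\<^sub>v v) = cnj (complex_of_real s) * (P $$ (i,i) * s + P $$ (i,j) * t)
      + cnj (complex_of_real t) * (P $$ (j,i) * s + P $$ (j,j) * t)"
    unfolding r2 r3 using i j by (simp add: sum.distrib)
  also have "P $$ (j,i) = cnj (P $$ (i,j))"
  proof -
    have "cadj P $$ (j,i) = cnj (P $$ (i,j))" using Pc i j by (simp add: cadj_def)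
    thus ?thesis using sa by simp
  qed
  finally show ?thesis by (simp add: power2_eq_square algebra_simps)
qed


lemma less4: "(i::nat) < 4 \<Longrightarrow> i = 0 \<or> i = 1 \<or> i = 2 \<or> i = 3" by auto
lemma less2: "(i::nat) < 2 \<Longrightarrow> i = 0 \<or> i = 1" by auto

definition A0 :: "complex mat" where
  "A0 = mat 2 2 (\<lambda>(i,j). if i = 1 \<and> j = 1 then 1 else 0)"
definition mv :: "nat \<Rightarrow> real" where
  "mv i = (if i = 1 then -1 else if i = 2 then 1 else 0)"
definition Mc :: "complex mat" where
  "Mc = mat_diag 4 (\<lambda>i. complex_of_real (mv i))"
definition Cc :: "complex mat" where
  "Cc = mat_diag 4 (\<lambda>i. if i = 1 \<or> i = 2 then 1 else 0)"

lemma kronM: "kron A0 (transpose_mat (1\<^sub>m 2)) - kron (1\<^sub>m 2) (transpose_mat A0) = Mc"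
proof (rule eq_matI)
  show "dim_row (kron A0 (transpose_mat (1\<^sub>m 2)) - kron (1\<^sub>m 2) (transpose_mat A0)) = dim_row Mc"
    by (simp add: kron_def A0_def Mc_def mat_diag_def)
  show "dim_col (kron A0 (transpose_mat (1\<^sub>m 2)) - kron (1\<^sub>m 2) (transpose_mat A0)) = dim_col Mc"
    by (simp add: kron_def A0_def Mc_def mat_diag_def)
  fix i j assume i: "i < dim_row Mc" and j: "j < dim_col Mc"
  hence i4: "i < 4" and j4: "j < 4" by (auto simp: Mc_def mat_diag_def)
  show "(kron A0 (transpose_mat (1\<^sub>m 2)) - kron (1\<^sub>m 2) (transpose_mat A0)) $$ (i, j) = Mc $$ (i, j)"
    using less4[OF i4] less4[OF j4]
    by (auto simp: kron_def A0_def Mc_def mat_diag_def mv_def)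
qed

lemma McCube: "Mc * Mc * Mc = Mc"
  unfolding Mc_def mat_diag_diag
  by (rule arg_cong[where f="mat_diag 4"]) (auto simp: mv_def)

lemma McSq: "Mc * Mc = Cc"
  unfolding Mc_def Cc_def mat_diag_diag
  by (rule arg_cong[where f="mat_diag 4"]) (auto simp: mv_def)

lemma cost: "cost_op 2 [A0] p = Cc"
proof -
  have "cost_op 2 [A0] p = abs_powr 4 Mc p + 0\<^sub>m 4 4"
    unfolding cost_op_def using kronM by simp
  also have "abs_powr 4 Mc p = Cc" using abs_powr_diag[OF Mc_def McCube] McSq by simp
  finally show ?thesis by (simp add: Cc_def)
qed

lemma trace_cost: "P \<in> carrier_mat 4 4 \<Longrightarrow> mtrace (P * Cc) = P $$ (1,1) + P $$ (2,2)"
  unfolding Cc_def by (simp add: mtrace_def mat_diag_mult_right eval_nat_numeral)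

lemma ptd: "i < 2 \<Longrightarrow> j < 2 \<Longrightarrow> ptrace_dual 2 P $$ (i,j) = P $$ (2*i,2*j) + P $$ (2*i+1,2*j+1)"
  by (simp add: ptrace_dual_def eval_nat_numeral algebra_simps)

lemma ptp: "i < 2 \<Longrightarrow> j < 2 \<Longrightarrow> ptrace_primal 2 P $$ (i,j) = P $$ (i,j) + P $$ (2+i,2+j)"
  by (simp add: ptrace_primal_def eval_nat_numeral algebra_simps)


lemma cfacts:
  assumes P: "P \<in> couplings 2 r w" and r: "r \<in> carrier_mat 2 2"
  shows "Re (w $$ (0,0)) = Re (P $$ (0,0)) + Re (P $$ (1,1))"
    "Re (w $$ (1,1)) = Re (P $$ (2,2)) + Re (P $$ (3,3))"
    "Re (w $$ (0,1)) = Re (P $$ (0,2)) + Re (P $$ (1,3))"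
    "Re (r $$ (0,0)) = Re (P $$ (0,0)) + Re (P $$ (2,2))"
    "Re (r $$ (1,1)) = Re (P $$ (1,1)) + Re (P $$ (3,3))"
    "\<And>k. k < 4 \<Longrightarrow> 0 \<le> Re (P $$ (k,k))"
    "\<And>s t. 0 \<le> s^2 * Re (P $$ (0,0)) + t^2 * Re (P $$ (2,2)) + 2 * s * t * Re (P $$ (0,2))"
    "\<And>s t. 0 \<le> s^2 * Re (P $$ (1,1)) + t^2 * Re (P $$ (3,3)) + 2 * s * t * Re (P $$ (1,3))"
    "Re (mtrace (P * Cc)) = Re (P $$ (1,1)) + Re (P $$ (2,2))"
proof -
  have st: "is_state 4 P" and pd: "ptrace_dual 2 P = w" and pp: "ptrace_primal 2 P = transpose_mat r"
    using P by (auto simp: couplings_def)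
  have pos: "positive_op 4 P" using st by (simp add: is_state_def)
  have Pc: "P \<in> carrier_mat 4 4" using pos by (simp add: positive_op_def self_adjoint_def)
  show "Re (w $$ (0,0)) = Re (P $$ (0,0)) + Re (P $$ (1,1))"
    using ptd[of 0 0 P] pd by simp
  show "Re (w $$ (1,1)) = Re (P $$ (2,2)) + Re (P $$ (3,3))"
    using ptd[of 1 1 P] pd by simp
  show "Re (w $$ (0,1)) = Re (P $$ (0,2)) + Re (P $$ (1,3))"
    using ptd[of 0 1 P] pd by simp
  show "Re (r $$ (0,0)) = Re (P $$ (0,0)) + Re (P $$ (2,2))"
    using ptp[of 0 0 P] pp r by simp
  show "Re (r $$ (1,1)) = Re (P $$ (1,1)) + Re (P $$ (3,3))"
    using ptp[of 1 1 P] pp r by simp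
  show "0 \<le> Re (P $$ (k,k))" if k: "k < 4" for k
  proof -
    define j where "j = (if k = 0 then 1 else (0::nat))"
    have j: "j < 4" "k \<noteq> j" by (auto simp: j_def)
    show ?thesis using quad[OF pos k j(1) j(2), of 1 0] by simp
  qed
  show "0 \<le> s^2 * Re (P $$ (0,0)) + t^2 * Re (P $$ (2,2)) + 2 * s * t * Re (P $$ (0,2))" for s t
    using quad[OF pos, of 0 2 s t] by simp
  show "0 \<le> s^2 * Re (P $$ (1,1)) + t^2 * Re (P $$ (3,3)) + 2 * s * t * Re (P $$ (1,3))" for s t
    using quad[OF pos, of 1 3 s t] by simp
  show "Re (mtrace (P * Cc)) = Re (P $$ (1,1)) + Re (P $$ (2,2))"
    using trace_cost[OF Pc] by simp
qed

definition e0 :: "nat \<Rightarrow> complex" where "e0 i = (if i = 0 then 1 else 0)"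
definition e1 :: "nat \<Rightarrow> complex" where "e1 i = (if i = 1 then 1 else 0)"
definition rho :: "complex mat" where "rho = outer 2 1 e0"
definition om :: "complex mat" where "om = outer 2 1 e1"
definition tau :: "complex mat" where "tau = outer 2 (1/2) (\<lambda>_. 1)"

lemma outer_state:
  assumes "0 \<le> c" "mtrace (outer n c w) = 1" shows "is_state n (outer n c w)"
  using assms outer_pos by (simp add: is_state_def)

lemma states: "is_state 2 rho" "is_state 2 om" "is_state 2 tau"
  unfolding rho_def om_def tau_def
  by (rule outer_state; simp add: mtrace_def outer_def e0_def e1_def eval_nat_numeral)+

lemma carr: "rho \<in> carrier_mat 2 2" "om \<in> carrier_mat 2 2" "tau \<in> carrier_mat 2 2"
  by (auto simp: rho_def om_def tau_def outer_def)

lemma vals: "Re (rho $$ (0,0)) = 1" "Re (rho $$ (1,1)) = 0"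
  "Re (om $$ (0,0)) = 0" "Re (om $$ (1,1)) = 1"
  "Re (tau $$ (0,0)) = 1/2" "Re (tau $$ (1,1)) = 1/2" "Re (tau $$ (0,1)) = 1/2"
  by (auto simp: rho_def om_def tau_def outer_def e0_def e1_def)

lemma coupling_outer:
  assumes c: "0 \<le> c" and tr: "mtrace (outer 4 c w) = 1"
    and d: "ptrace_dual 2 (outer 4 c w) = b" and p: "ptrace_primal 2 (outer 4 c w) = transpose_mat a"
  shows "outer 4 c w \<in> couplings 2 a b"
  using outer_state[OF c, of 4 w] tr d p by (simp add: couplings_def)

lemma mat2eq: "A \<in> carrier_mat 2 2 \<Longrightarrow> B \<in> carrier_mat 2 2 \<Longrightarrow>
   A $$ (0,0) = B $$ (0,0) \<Longrightarrow> A $$ (0,1) = B $$ (0,1) \<Longrightarrow> A $$ (1,0) = B $$ (1,0) \<Longrightarrow> A $$ (1,1) = B $$ (1,1) \<Longrightarrow> A = B"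
  by (rule eq_matI) (auto dest!: less2)


lemma ptd_carr[simp]: "ptrace_dual n P \<in> carrier_mat n n" by (simp add: ptrace_dual_def)
lemma ptp_carr[simp]: "ptrace_primal n P \<in> carrier_mat n n" by (simp add: ptrace_primal_def)

lemma Dval:
  assumes "P0 \<in> couplings 2 a b" "Re (mtrace (P0 * Cc)) = v"
    "\<And>P. P \<in> couplings 2 a b \<Longrightarrow> v \<le> Re (mtrace (P * Cc))"
  shows "D_qot 2 [A0] p a b = v powr (min (1/p) 1)"
proof -
  have "Inf {Re (mtrace (P * cost_op 2 [A0] p)) | P. P \<in> couplings 2 a b} = v"
    unfolding cost by (rule cInf_eq_minimum) (use assms in auto)
  thus ?thesis by (simp add: D_qot_def)
qed

lemma wit_ro: "outer 4 (1) (\<lambda>k. if k = 2 then 1 else 0) \<in> couplings 2 rho om"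
  "Re (mtrace (outer 4 (1) (\<lambda>k. if k = 2 then 1 else 0) * Cc)) = 1"
proof -
  let ?P = "outer 4 (1) (\<lambda>k. if k = 2 then 1 else 0)"
  have Pc: "?P \<in> carrier_mat 4 4" by (simp add: outer_def)
  show "?P \<in> couplings 2 rho om"
  proof (rule coupling_outer)
    show "mtrace ?P = 1" by (simp add: mtrace_def outer_def eval_nat_numeral)
    show "ptrace_dual 2 ?P = om"
      by (rule mat2eq) (use carr in \<open>simp_all add: ptd outer_def rho_def om_def tau_def e0_def e1_def\<close>)
    show "ptrace_primal 2 ?P = transpose_mat rho"
      by (rule mat2eq) (use carr in \<open>simp_all add: ptp outer_def rho_def om_def tau_def e0_def e1_def\<close>)
  qed simp
  show "Re (mtrace (?P * Cc)) = 1" unfolding trace_cost[OF Pc] by (simp add: outer_def)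
qed

lemma wit_rr: "outer 4 (1) (\<lambda>k. if k = 0 then 1 else 0) \<in> couplings 2 rho rho"
  "Re (mtrace (outer 4 (1) (\<lambda>k. if k = 0 then 1 else 0) * Cc)) = 0"
proof -
  let ?P = "outer 4 (1) (\<lambda>k. if k = 0 then 1 else 0)"
  have Pc: "?P \<in> carrier_mat 4 4" by (simp add: outer_def)
  show "?P \<in> couplings 2 rho rho"
  proof (rule coupling_outer)
    show "mtrace ?P = 1" by (simp add: mtrace_def outer_def eval_nat_numeral)
    show "ptrace_dual 2 ?P = rho"
      by (rule mat2eq) (use carr in \<open>simp_all add: ptd outer_def rho_def om_def tau_def e0_def e1_def\<close>)
    show "ptrace_primal 2 ?P = transpose_mat rho"
      by (rule mat2eq) (use carr in \<open>simp_all add: ptp outer_def rho_def om_def tau_def e0_def e1_def\<close>)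
  qed simp
  show "Re (mtrace (?P * Cc)) = 0" unfolding trace_cost[OF Pc] by (simp add: outer_def)
qed

lemma wit_oo: "outer 4 (1) (\<lambda>k. if k = 3 then 1 else 0) \<in> couplings 2 om om"
  "Re (mtrace (outer 4 (1) (\<lambda>k. if k = 3 then 1 else 0) * Cc)) = 0"
proof -
  let ?P = "outer 4 (1) (\<lambda>k. if k = 3 then 1 else 0)"
  have Pc: "?P \<in> carrier_mat 4 4" by (simp add: outer_def)
  show "?P \<in> couplings 2 om om"
  proof (rule coupling_outer)
    show "mtrace ?P = 1" by (simp add: mtrace_def outer_def eval_nat_numeral)
    show "ptrace_dual 2 ?P = om"
      by (rule mat2eq) (use carr in \<open>simp_all add: ptd outer_def rho_def om_def tau_def e0_def e1_def\<close>)
    show "ptrace_primal 2 ?P = transpose_mat om"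
      by (rule mat2eq) (use carr in \<open>simp_all add: ptp outer_def rho_def om_def tau_def e0_def e1_def\<close>)
  qed simp
  show "Re (mtrace (?P * Cc)) = 0" unfolding trace_cost[OF Pc] by (simp add: outer_def)
qed

lemma wit_rt: "outer 4 (1/2) (\<lambda>k. if k = 0 \<or> k = 2 then 1 else 0) \<in> couplings 2 rho tau"
  "Re (mtrace (outer 4 (1/2) (\<lambda>k. if k = 0 \<or> k = 2 then 1 else 0) * Cc)) = 1/2"
proof -
  let ?P = "outer 4 (1/2) (\<lambda>k. if k = 0 \<or> k = 2 then 1 else 0)"
  have Pc: "?P \<in> carrier_mat 4 4" by (simp add: outer_def)
  show "?P \<in> couplings 2 rho tau"
  proof (rule coupling_outer)
    show "mtrace ?P = 1" by (simp add: mtrace_def outer_def eval_nat_numeral)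
    show "ptrace_dual 2 ?P = tau"
      by (rule mat2eq) (use carr in \<open>simp_all add: ptd outer_def rho_def om_def tau_def e0_def e1_def\<close>)
    show "ptrace_primal 2 ?P = transpose_mat rho"
      by (rule mat2eq) (use carr in \<open>simp_all add: ptp outer_def rho_def om_def tau_def e0_def e1_def\<close>)
  qed simp
  show "Re (mtrace (?P * Cc)) = 1/2" unfolding trace_cost[OF Pc] by (simp add: outer_def)
qed

lemma wit_to: "outer 4 (1/2) (\<lambda>k. if k = 2 \<or> k = 3 then 1 else 0) \<in> couplings 2 tau om"
  "Re (mtrace (outer 4 (1/2) (\<lambda>k. if k = 2 \<or> k = 3 then 1 else 0) * Cc)) = 1/2"
proof -
  let ?P = "outer 4 (1/2) (\<lambda>k. if k = 2 \<or> k = 3 then 1 else 0)"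
  have Pc: "?P \<in> carrier_mat 4 4" by (simp add: outer_def)
  show "?P \<in> couplings 2 tau om"
  proof (rule coupling_outer)
    show "mtrace ?P = 1" by (simp add: mtrace_def outer_def eval_nat_numeral)
    show "ptrace_dual 2 ?P = om"
      by (rule mat2eq) (use carr in \<open>simp_all add: ptd outer_def rho_def om_def tau_def e0_def e1_def\<close>)
    show "ptrace_primal 2 ?P = transpose_mat tau"
      by (rule mat2eq) (use carr in \<open>simp_all add: ptp outer_def rho_def om_def tau_def e0_def e1_def\<close>)
  qed simp
  show "Re (mtrace (?P * Cc)) = 1/2" unfolding trace_cost[OF Pc] by (simp add: outer_def)
qed

lemma wit_tt: "outer 4 (1/4) (\<lambda>k. if True then 1 else 0) \<in> couplings 2 tau tau"
  "Re (mtrace (outer 4 (1/4) (\<lambda>k. if True then 1 else 0) * Cc)) = 1/2"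
proof -
  let ?P = "outer 4 (1/4) (\<lambda>k. if True then 1 else 0)"
  have Pc: "?P \<in> carrier_mat 4 4" by (simp add: outer_def)
  show "?P \<in> couplings 2 tau tau"
  proof (rule coupling_outer)
    show "mtrace ?P = 1" by (simp add: mtrace_def outer_def eval_nat_numeral)
    show "ptrace_dual 2 ?P = tau"
      by (rule mat2eq) (use carr in \<open>simp_all add: ptd outer_def rho_def om_def tau_def e0_def e1_def\<close>)
    show "ptrace_primal 2 ?P = transpose_mat tau"
      by (rule mat2eq) (use carr in \<open>simp_all add: ptp outer_def rho_def om_def tau_def e0_def e1_def\<close>)
  qed simp
  show "Re (mtrace (?P * Cc)) = 1/2" unfolding trace_cost[OF Pc] by (simp add: outer_def)
qed


lemma lb_ro: "P \<in> couplings 2 rho om \<Longrightarrow> 1 \<le> Re (mtrace (P * Cc))"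
proof -
  assume P: "P \<in> couplings 2 rho om"
  note f = cfacts[OF P carr(1)]
  show ?thesis using f(1-5) f(6)[of 0] f(6)[of 1] f(6)[of 2] f(6)[of 3] f(9) vals by linarith
qed
lemma lb_rr: "P \<in> couplings 2 rho rho \<Longrightarrow> 0 \<le> Re (mtrace (P * Cc))"
proof -
  assume P: "P \<in> couplings 2 rho rho"
  note f = cfacts[OF P carr(1)]
  show ?thesis using f(1-5) f(6)[of 0] f(6)[of 1] f(6)[of 2] f(6)[of 3] f(9) vals by linarith
qed
lemma lb_oo: "P \<in> couplings 2 om om \<Longrightarrow> 0 \<le> Re (mtrace (P * Cc))"
proof -
  assume P: "P \<in> couplings 2 om om"
  note f = cfacts[OF P carr(2)]
  show ?thesis using f(1-5) f(6)[of 0] f(6)[of 1] f(6)[of 2] f(6)[of 3] f(9) vals by linarith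
qed
lemma lb_rt: "P \<in> couplings 2 rho tau \<Longrightarrow> 1/2 \<le> Re (mtrace (P * Cc))"
proof -
  assume P: "P \<in> couplings 2 rho tau"
  note f = cfacts[OF P carr(1)]
  show ?thesis using f(1-5) f(6)[of 0] f(6)[of 1] f(6)[of 2] f(6)[of 3] f(9) vals by linarith
qed
lemma lb_to: "P \<in> couplings 2 tau om \<Longrightarrow> 1/2 \<le> Re (mtrace (P * Cc))"
proof -
  assume P: "P \<in> couplings 2 tau om"
  note f = cfacts[OF P carr(3)]
  show ?thesis using f(1-5) f(6)[of 0] f(6)[of 1] f(6)[of 2] f(6)[of 3] f(9) vals by linarith
qed

lemma lb_tt: assumes P: "P \<in> couplings 2 tau tau" shows "1/2 \<le> Re (mtrace (P * Cc))"
proof -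
  note f = cfacts[OF P carr(3)]
  define a where "a = Re (P $$ (0,0))"
  define x1 where "x1 = Re (P $$ (1,1))"
  define x2 where "x2 = Re (P $$ (2,2))"
  define x3 where "x3 = Re (P $$ (3,3))"
  define R where "R = Re (P $$ (0,2))"
  define S where "S = Re (P $$ (1,3))"
  have e: "a + x1 = 1/2" "x2 + x3 = 1/2" "R + S = 1/2" "a + x2 = 1/2" "x1 + x3 = 1/2"
    using f(1-5) vals unfolding a_def x1_def x2_def x3_def R_def S_def by auto
  have a0: "0 \<le> a" using f(6)[of 0] by (simp add: a_def)
  have q1: "0 \<le> s^2 * a + t^2 * x2 + 2 * s * t * R" for s t using f(7)[of s t] by (simp add: a_def x2_def R_def)
  have q2: "0 \<le> s^2 * x1 + t^2 * x3 + 2 * s * t * S" for s t using f(8)[of s t] by (simp add: x1_def x3_def S_def)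
  have "a \<le> 1/4"
  proof (rule ccontr)
    assume "\<not> a \<le> 1/4"
    hence ag: "a > 1/4" by simp
    define q where "q = 1 / (4 * a)"
    have qa: "q * a = 1/4" using ag by (simp add: q_def)
    have qp: "q > 0" using ag by (simp add: q_def)
    have A: "0 \<le> q^2 * a + x2 - 2 * q * R" using q1[of q "-1"] by simp
    have B: "0 \<le> x1 + q^2 * x3 - 2 * q * S" using q2[of 1 "-q"] by simp
    have x2e: "x2 = 1/2 - a" and x1e: "x1 = 1/2 - a" and x3e: "x3 = a" using e by linarith+
    have "0 \<le> 2 * q * (q * a) + 1 - 2 * a - 2 * q * (R + S)"
      using A B x1e x2e x3e by (simp add: power2_eq_square algebra_simps)
    hence "0 \<le> 1 - 2 * a - q / 2" using qa e(3) by simp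
    hence "0 \<le> 4 * a * (1 - 2 * a - q / 2)" using ag by simp
    also have "4 * a * (1 - 2 * a - q / 2) = 4 * a - 8 * a * a - 1/2"
      using qa by (simp add: algebra_simps)
    finally have "0 \<le> 4 * a - 8 * a * a - 1/2" .
    hence "0 \<le> - ((4 * a - 1) * (4 * a - 1)) / 2" by (simp add: algebra_simps)
    moreover have "(4 * a - 1) * (4 * a - 1) > 0" using ag by simp
    ultimately show False by linarith
  qed
  thus ?thesis using f(9) e unfolding x1_def x2_def a_def by linarith
qed

lemma Ds:
  "D_qot 2 [A0] p rho om = 1 powr (min (1/p) 1)"
  "D_qot 2 [A0] p rho rho = 0 powr (min (1/p) 1)"
  "D_qot 2 [A0] p om om = 0 powr (min (1/p) 1)"
  "D_qot 2 [A0] p rho tau = (1/2) powr (min (1/p) 1)"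
  "D_qot 2 [A0] p tau om = (1/2) powr (min (1/p) 1)"
  "D_qot 2 [A0] p tau tau = (1/2) powr (min (1/p) 1)"
  by (rule Dval[OF wit_ro lb_ro] Dval[OF wit_rr lb_rr] Dval[OF wit_oo lb_oo]
      Dval[OF wit_rt lb_rt] Dval[OF wit_to lb_to] Dval[OF wit_tt lb_tt]; assumption)+


theorem proposition6p3:
  fixes p :: real
  assumes "0 < p" and "p < 2"
  shows "\<exists>(n::nat) (As::complex mat list) \<rho> \<tau> \<omega>.
           (\<forall>A \<in> set As. self_adjoint n A) \<and>
           is_state n \<rho> \<and> is_state n \<tau> \<and> is_state n \<omega> \<and>
           d_qot n As p \<rho> \<omega> > d_qot n As p \<rho> \<tau> + d_qot n As p \<tau> \<omega>"
proof -
  define e where "e = min (1/p) 1"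
  define m where "m = max p 1"
  define h where "h = (1/2::real) powr e"
  define g where "g = (h powr m / 2) powr e"
  have m0: "m > 0" by (simp add: m_def)
  have e0: "e > 0" using assms by (simp add: e_def)
  have d1: "d_qot 2 [A0] p rho om = 1"
    using m0 e0 by (simp add: d_qot_def Ds e_def[symmetric] m_def[symmetric])
  have d2: "d_qot 2 [A0] p rho tau = g"
    using m0 e0 by (simp add: d_qot_def Ds e_def[symmetric] m_def[symmetric] h_def[symmetric] g_def)
  have d3: "d_qot 2 [A0] p tau om = g"
    using m0 e0 by (simp add: d_qot_def Ds e_def[symmetric] m_def[symmetric] h_def[symmetric] g_def)
  have g: "2 * g < 1"
  proof (cases "p \<le> 1")
    case True
    hence "e = 1" "m = 1" using assms by (auto simp: e_def m_def)
    thus ?thesis by (simp add: g_def h_def)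
  next
    case False
    hence ee: "e = 1/p" and mm: "m = p" using assms by (auto simp: e_def m_def)
    have hm: "h powr m = 1/2" using assms by (simp add: h_def ee mm powr_powr)
    have "g = (1/4) powr (1/p)" unfolding g_def ee hm by simp
    also have "\<dots> = 1 / 4 powr (1/p)" by (simp add: powr_divide)
    finally have gg: "g = 1 / 4 powr (1/p)" .
    have "(4::real) powr (1/2) < 4 powr (1/p)"
      by (rule powr_less_mono) (use assms in \<open>auto simp: field_simps\<close>)
    moreover have "(4::real) powr (1/2) = 2"
      by (simp add: powr_half_sqrt)
    ultimately have "2 < (4::real) powr (1/p)" by simp
    hence "2 / (4::real) powr (1/p) < 1" by (simp add: divide_less_eq)
    thus ?thesis using gg by simp
  qed
  have sa: "self_adjoint 2 A0"
    unfolding self_adjoint_def A0_def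
    by (auto intro!: eq_matI simp: cadj_def)
  show ?thesis
    apply (rule exI[of _ 2], rule exI[of _ "[A0]"], rule exI[of _ rho], rule exI[of _ tau], rule exI[of _ om])
    using sa states d1 d2 d3 g by simp
qed

end
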